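(* Let $(A,B)$ be a Katsura pair with KEP-action $(G_B,E_A)$, and let $E^0_{A,<\infty}=\{i\in E^0_A:(G_B)_i\text{ is finite}\}$. If $e\in E_A^1$ satisfies $B_e\ne0$ and $r(e)\in E^0_{A,<\infty}$, then $s(e)\in E^0_{A,<\infty}$.
   Context: Katsura pair: $N\in\mathbb{N}$, $A\in M_N(\mathbb{N})$ (nonnegative integers), $B\in M_N(\mathbb{Z})$ with $A_{ij}=0\Rightarrow B_{ij}=0$. Graph $E_A$: vertices $\{1,\dots,N\}$, edges $e_{i,j,m}$ ($0\le m<A_{ij}$), $r=i$, $s=j$; for an edge $e$, $B_e=B_{r(e)s(e)}$. The group bundle $\mathbb{Z}\times E_A^0$ (elements $a_i^k$, $a_i^ka_i^l=a_i^{k+l}$) acts on finite paths by $a_i^k\cdot e_{i,j,m}=e_{i,j,\hat m}$, $a_i^k|_{e_{i,j,m}}=a_j^{\hat k}$ where $kB_{ij}+m=\hat kA_{ij}+\hat m$, $0\le\hat m<A_{ij}$, extended recursively by $g\cdot(e\nu)=(g\cdot e)(g|_e\cdot\nu)$. $G_B$ is the quotient by the elements acting trivially (the KEP-action $(G_B,E_A)$), and $(G_B)_i$ is the cyclic group of elements of $G_B$ at the vertex $i$. *)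

theory Defs
  imports Main
begin

text \<open>Matrices over vertices 1..N are functions nat => nat => _ (only entries with
indices in 1..N are relevant). An edge e_{i,j,m} is the triple (i,j,m); r = i, s = j.\<close>

type_synonym edge = "nat \<times> nat \<times> nat"

definition katsura_pair :: "nat \<Rightarrow> (nat \<Rightarrow> nat \<Rightarrow> nat) \<Rightarrow> (nat \<Rightarrow> nat \<Rightarrow> int) \<Rightarrow> bool" where
  "katsura_pair N A B \<longleftrightarrow> N \<ge> 1 \<and>
     (\<forall>i\<in>{1..N}. \<forall>j\<in>{1..N}. A i j = 0 \<longrightarrow> B i j = 0)"

definition e_range :: "edge \<Rightarrow> nat" where "e_range e = fst e"
definition e_source :: "edge \<Rightarrow> nat" where "e_source e = fst (snd e)"

definition is_edge :: "nat \<Rightarrow> (nat \<Rightarrow> nat \<Rightarrow> nat) \<Rightarrow> edge \<Rightarrow> bool" where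
  "is_edge N A e \<longleftrightarrow> (case e of (i, j, m) \<Rightarrow> i \<in> {1..N} \<and> j \<in> {1..N} \<and> m < A i j)"

fun chain :: "edge list \<Rightarrow> bool" where
  "chain [] = True"
| "chain [e] = True"
| "chain (e # f # p) \<longleftrightarrow> e_source e = e_range f \<and> chain (f # p)"

definition is_path :: "nat \<Rightarrow> (nat \<Rightarrow> nat \<Rightarrow> nat) \<Rightarrow> edge list \<Rightarrow> bool" where
  "is_path N A p \<longleftrightarrow> p \<noteq> [] \<and> (\<forall>e\<in>set p. is_edge N A e) \<and> chain p"

text \<open>Action of a_{r(p)}^k on a path p (a_i^k acts on paths with range i; vertices are fixed):
 a_i^k . e_{i,j,m} = e_{i,j,m'}, a_i^k|_{e} = a_j^{k'} where k B_ij + m = k' A_ij + m', 0 <= m' < A_ij,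
 and g.(e nu) = (g.e)(g|_e . nu).\<close>
fun kep_act :: "(nat \<Rightarrow> nat \<Rightarrow> nat) \<Rightarrow> (nat \<Rightarrow> nat \<Rightarrow> int) \<Rightarrow> int \<Rightarrow> edge list \<Rightarrow> edge list" where
  "kep_act A B k [] = []"
| "kep_act A B k ((i, j, m) # p) =
     (let t = k * B i j + int m
      in (i, j, nat (t mod int (A i j))) # kep_act A B (t div int (A i j)) p)"

text \<open>(G_B)_i: the cyclic group {a_i^k : k in Z} modulo the elements acting trivially,
i.e. a_i^k and a_i^l are identified iff they act identically on all paths with range i.\<close>
definition vertex_group :: "nat \<Rightarrow> (nat \<Rightarrow> nat \<Rightarrow> nat) \<Rightarrow> (nat \<Rightarrow> nat \<Rightarrow> int) \<Rightarrow> nat \<Rightarrow> int set set" where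
  "vertex_group N A B i = (UNIV :: int set) //
     {(k, l). \<forall>p. is_path N A p \<and> e_range (hd p) = i \<longrightarrow> kep_act A B k p = kep_act A B l p}"

definition finite_vertices :: "nat \<Rightarrow> (nat \<Rightarrow> nat \<Rightarrow> nat) \<Rightarrow> (nat \<Rightarrow> nat \<Rightarrow> int) \<Rightarrow> nat set" where
  "finite_vertices N A B = {i \<in> {1..N}. finite (vertex_group N A B i)}"

definition B_edge :: "(nat \<Rightarrow> nat \<Rightarrow> int) \<Rightarrow> edge \<Rightarrow> int" where
  "B_edge B e = B (e_range e) (e_source e)"

end

theory Submission
  imports Defs
begin

definition good :: "(nat \<Rightarrow> nat \<Rightarrow> nat) \<Rightarrow> edge list \<Rightarrow> bool" where
  "good A p \<longleftrightarrow> (\<forall>e\<in>set p. snd (snd e) < A (fst e) (fst (snd e)))"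

definition st :: "edge \<Rightarrow> nat \<times> nat" where "st e = (fst e, fst (snd e))"

lemma act_st: "map st (kep_act A B k p) = map st p"
  by (induction p arbitrary: k) (auto simp: st_def Let_def)

lemma act_good: "good A p \<Longrightarrow> good A (kep_act A B k p)"
proof (induction p arbitrary: k)
  case Nil then show ?case by (simp add: good_def)
next
  case (Cons e p)
  obtain i j m where e: "e = (i,j,m)" by (cases e) auto
  have "m < A i j" using Cons.prems e by (simp add: good_def)
  then have "0 < int (A i j)" by simp
  then have "nat ((k * B i j + int m) mod int (A i j)) < A i j"
    using pos_mod_bound[of "int (A i j)" "k * B i j + int m"] pos_mod_sign[of "int (A i j)" "k * B i j + int m"]
    by (simp add: nat_less_iff)
  moreover have "good A p" using Cons.prems by (simp add: good_def)
  ultimately show ?case using Cons.IH e by (simp add: good_def Let_def)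
qed

lemma act_zero: "good A p \<Longrightarrow> kep_act A B 0 p = p"
proof (induction p)
  case Nil then show ?case by simp
next
  case (Cons e p)
  obtain i j m where e: "e = (i,j,m)" by (cases e) auto
  have "m < A i j" using Cons.prems e by (simp add: good_def)
  moreover have "good A p" using Cons.prems by (simp add: good_def)
  ultimately show ?case using Cons.IH e by (simp add: Let_def)
qed

lemma divmod_aux:
  fixes a k l b m :: int
  assumes "0 < a"
  shows "(k*b + (l*b+m)) mod a = (k*b + (l*b+m) mod a) mod a"
    and "(k*b + (l*b+m)) div a = (k*b + (l*b+m) mod a) div a + (l*b+m) div a"
proof -
  have eq: "k*b + (l*b+m) = (k*b + (l*b+m) mod a) + ((l*b+m) div a) * a"
    by simp
  show "(k*b + (l*b+m)) mod a = (k*b + (l*b+m) mod a) mod a"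
    by (metis mod_add_right_eq)
  show "(k*b + (l*b+m)) div a = (k*b + (l*b+m) mod a) div a + (l*b+m) div a"
  proof -
    have "((k*b + (l*b+m) mod a) + ((l*b+m) div a) * a) div a = (k*b + (l*b+m) mod a) div a + (l*b+m) div a"
      using assms by (metis add.commute div_mult_self1 less_irrefl)
    then show ?thesis using eq by metis
  qed
qed

lemma act_add: "good A p \<Longrightarrow> kep_act A B (k + l) p = kep_act A B k (kep_act A B l p)"
proof (induction p arbitrary: k l)
  case Nil then show ?case by simp
next
  case (Cons e p)
  obtain i j m where e: "e = (i,j,m)" by (cases e) auto
  have "m < A i j" using Cons.prems e by (simp add: good_def)
  then have a: "0 < int (A i j)" by simp
  have gp: "good A p" using Cons.prems by (simp add: good_def)
  have nn: "int (nat ((l * B i j + int m) mod int (A i j))) = (l * B i j + int m) mod int (A i j)"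
    using a by simp
  have nn0: "0 \<le> (l * B i j + int m) mod int (A i j)" using a by simp
  have s: "(k+l) * B i j + int m = k * B i j + (l * B i j + int m)" by (simp add: algebra_simps)
  show ?case using e Cons.IH[OF gp] divmod_aux[OF a, of k "B i j" l "int m"]
    by (simp add: Let_def nn nn0 s)
qed

lemma chain_st: "chain p \<Longrightarrow> map st p = map st q \<Longrightarrow> chain q"
proof (induction p arbitrary: q rule: chain.induct)
  case 1 then show ?case by simp
next
  case (2 e) then show ?case by (cases q) auto
next
  case (3 e f p)
  then obtain e' f' q' where q: "q = e' # f' # q'"
    by (cases q; cases "tl q") auto
  have "st e = st e'" "st f = st f'" "map st (f#p) = map st (f'#q')" using 3(3) q by auto
  then have "e_source e' = e_range f'" using 3(2) by (simp add: st_def e_source_def e_range_def)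
  moreover have "chain (f'#q')" using 3 \<open>map st (f#p) = map st (f'#q')\<close> by simp
  ultimately show ?case using q by simp
qed

lemma path_good: "is_path N A p \<Longrightarrow> good A p"
  unfolding is_path_def good_def is_edge_def by fastforce

lemma act_path: "is_path N A p \<Longrightarrow> is_path N A (kep_act A B k p) \<and> e_range (hd (kep_act A B k p)) = e_range (hd p)"
proof -
  assume P: "is_path N A p"
  have M: "map st (kep_act A B k p) = map st p" by (rule act_st)
  have G: "good A (kep_act A B k p)" using act_good path_good P by blast
  have ne: "kep_act A B k p \<noteq> []" using M P unfolding is_path_def by auto
  have ch: "chain (kep_act A B k p)" using chain_st[of p] M P unfolding is_path_def by metis
  have ed: "\<forall>e\<in>set (kep_act A B k p). is_edge N A e"
  proof
    fix e assume e: "e \<in> set (kep_act A B k p)"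
    then have "st e \<in> set (map st p)" using M by (metis image_eqI list.set_map)
    then obtain e0 where e0: "e0 \<in> set p" "st e = st e0" by auto
    have "is_edge N A e0" using e0 P unfolding is_path_def by auto
    moreover have "snd (snd e) < A (fst e) (fst (snd e))" using G e unfolding good_def by auto
    ultimately show "is_edge N A e" using e0(2) unfolding is_edge_def st_def
      by (cases e; cases e0) auto
  qed
  have "hd (map st (kep_act A B k p)) = hd (map st p)" using M by simp
  then have "st (hd (kep_act A B k p)) = st (hd p)" using ne P unfolding is_path_def
    by (simp add: hd_map)
  then show ?thesis using ne ch ed unfolding is_path_def st_def e_range_def by auto
qed

definition S :: "nat \<Rightarrow> (nat \<Rightarrow> nat \<Rightarrow> nat) \<Rightarrow> nat \<Rightarrow> edge list \<Rightarrow> bool" where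
  "S N A v p \<longleftrightarrow> is_path N A p \<and> e_range (hd p) = v"

lemma S_act: "S N A v p \<Longrightarrow> S N A v (kep_act A B k p)"
  using act_path unfolding S_def by metis

lemma S_add: "S N A v p \<Longrightarrow> kep_act A B (k + l) p = kep_act A B k (kep_act A B l p)"
  using act_add path_good unfolding S_def by blast

lemma S_zero: "S N A v p \<Longrightarrow> kep_act A B 0 p = p"
  using act_zero path_good unfolding S_def by blast

lemma period_inv:
  assumes per: "\<forall>p. S N A v p \<longrightarrow> kep_act A B D p = p"
  shows "S N A v p \<Longrightarrow> kep_act A B (x + n * D) p = kep_act A B x p"
proof -
  assume Sp: "S N A v p"
  have nat_case: "\<And>q. S N A v q \<Longrightarrow> kep_act A B (int n' * D) q = q" for n'
  proof (induction n')
    case 0 then show ?case using S_zero by simp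
  next
    case (Suc n')
    have "kep_act A B (int (Suc n') * D) q = kep_act A B (int n' * D + D) q"
      by (simp add: algebra_simps)
    also have "\<dots> = kep_act A B (int n' * D) (kep_act A B D q)" using S_add Suc.prems by blast
    also have "\<dots> = q" using per Suc by simp
    finally show ?case .
  qed
  have all: "\<And>q. S N A v q \<Longrightarrow> kep_act A B (n * D) q = q"
  proof -
    fix q assume Sq: "S N A v q"
    show "kep_act A B (n * D) q = q"
    proof (cases "n \<ge> 0")
      case True
      then obtain n' where "n = int n'" by (metis nonneg_int_cases)
      then show ?thesis using nat_case Sq by simp
    next
      case False
      then obtain n' where n: "n = - int n'" by (metis nonpos_int_cases linorder_not_le less_imp_le)
      have "kep_act A B (n * D) q = kep_act A B (n * D) (kep_act A B (int n' * D) q)"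
        using nat_case Sq by simp
      also have "\<dots> = kep_act A B (n * D + int n' * D) q" using S_add Sq by metis
      also have "\<dots> = q" using n S_zero Sq by simp
      finally show ?thesis .
    qed
  qed
  have "kep_act A B (x + n * D) p = kep_act A B x (kep_act A B (n * D) p)" using S_add Sp by blast
  then show ?thesis using all Sp by simp
qed

lemma vg_eq: "vertex_group N A B v = UNIV // {(k, l). \<forall>p. S N A v p \<longrightarrow> kep_act A B k p = kep_act A B l p}"
  unfolding vertex_group_def S_def by simp

lemma periodic_finite:
  assumes D: "D \<noteq> 0" and per: "\<forall>p. S N A v p \<longrightarrow> kep_act A B D p = p"
  shows "finite (vertex_group N A B v)"
proof -
  define R where "R = {(k, l). \<forall>p. S N A v p \<longrightarrow> kep_act A B k p = kep_act A B l p}"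
  have "UNIV // R \<subseteq> (\<lambda>x. R``{x}) ` {0..<\<bar>D\<bar>}"
  proof
    fix X assume "X \<in> UNIV // R"
    then obtain x where X: "X = R``{x}" by (auto simp: quotient_def)
    define n where "n = - (x div \<bar>D\<bar>) * sgn D"
    have "x mod \<bar>D\<bar> = x + n * D" unfolding n_def
    proof -
      have "sgn D * D = \<bar>D\<bar>" by (simp add: abs_sgn mult.commute)
      then have "(- (x div \<bar>D\<bar>) * sgn D) * D = - (x div \<bar>D\<bar> * \<bar>D\<bar>)" by (metis mult.assoc mult_minus_left)
      then have "x + (- (x div \<bar>D\<bar>) * sgn D) * D = x - x div \<bar>D\<bar> * \<bar>D\<bar>" by simp
      then show "x mod \<bar>D\<bar> = x + (- (x div \<bar>D\<bar>) * sgn D) * D" by (simp add: minus_div_mult_eq_mod)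
    qed
    then have eq: "\<forall>p. S N A v p \<longrightarrow> kep_act A B (x mod \<bar>D\<bar>) p = kep_act A B x p"
      using period_inv[OF per] by simp
    have "R``{x} = R``{x mod \<bar>D\<bar>}" unfolding R_def using eq by auto
    moreover have "x mod \<bar>D\<bar> \<in> {0..<\<bar>D\<bar>}" using D by simp
    ultimately show "X \<in> (\<lambda>x. R``{x}) ` {0..<\<bar>D\<bar>}" using X by blast
  qed
  then show ?thesis unfolding vg_eq R_def[symmetric] by (rule finite_subset) simp
qed

lemma finite_periodic:
  assumes fin: "finite (vertex_group N A B v)"
  shows "\<exists>D. D \<noteq> 0 \<and> (\<forall>p. S N A v p \<longrightarrow> kep_act A B D p = p)"
proof -
  define R where "R = {(k, l). \<forall>p. S N A v p \<longrightarrow> kep_act A B k p = kep_act A B l p}"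
  have "UNIV // R = range (\<lambda>x. R``{x})" by (auto simp: quotient_def)
  then have "finite ((\<lambda>x. R``{x}) ` UNIV)" using fin unfolding vg_eq R_def[symmetric] by simp
  then have "\<not> inj (\<lambda>x. R``{x})" using finite_imageD infinite_UNIV_int by blast
  then obtain k l where kl: "k \<noteq> l" "R``{k} = R``{l}" unfolding inj_def by blast
  have "k \<in> R``{k}" unfolding R_def by simp
  then have "(l, k) \<in> R" using kl by simp
  then have E: "\<forall>p. S N A v p \<longrightarrow> kep_act A B l p = kep_act A B k p" unfolding R_def by simp
  have "\<forall>p. S N A v p \<longrightarrow> kep_act A B (l - k) p = p"
  proof (intro allI impI)
    fix p assume Sp: "S N A v p"
    have S2: "S N A v (kep_act A B (-k) p)" using S_act Sp by blast
    have "kep_act A B (l - k) p = kep_act A B l (kep_act A B (-k) p)" using S_add Sp by (metis diff_conv_add_uminus)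
    also have "\<dots> = kep_act A B k (kep_act A B (-k) p)" using E S2 by simp
    also have "\<dots> = kep_act A B (k + - k) p" using S_add Sp by metis
    also have "\<dots> = p" using S_zero Sp by simp
    finally show "kep_act A B (l - k) p = p" .
  qed
  then show ?thesis using kl(1) by (metis eq_iff_diff_eq_0)
qed

theorem corollary3p1:
  fixes N :: nat and A :: "nat \<Rightarrow> nat \<Rightarrow> nat" and B :: "nat \<Rightarrow> nat \<Rightarrow> int" and e :: edge
  assumes "katsura_pair N A B"
    and "is_edge N A e"
    and "B_edge B e \<noteq> 0"
    and "e_range e \<in> finite_vertices N A B"
  shows "e_source e \<in> finite_vertices N A B"
proof -
  obtain i j m where e: "e = (i, j, m)" by (cases e) auto
  have ij: "i \<in> {1..N}" "j \<in> {1..N}" "m < A i j" using assms(2) e by (auto simp: is_edge_def)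
  have b: "B i j \<noteq> 0" using assms(3) e by (simp add: B_edge_def e_range_def e_source_def)
  have "finite (vertex_group N A B i)" using assms(4) e by (simp add: finite_vertices_def e_range_def)
  then obtain D where D: "D \<noteq> 0" "\<forall>p. S N A i p \<longrightarrow> kep_act A B D p = p"
    using finite_periodic by blast
  define a where "a = int (A i j)"
  have a: "0 < a" using ij a_def by simp
  have per_i: "\<forall>p. S N A i p \<longrightarrow> kep_act A B (D * a) p = p"
    using period_inv[OF D(2), of _ 0 a] by (simp add: S_zero mult.commute)
  have per_j: "\<forall>q. S N A j q \<longrightarrow> kep_act A B (D * B i j) q = q"
  proof (intro allI impI)
    fix q assume Sq: "S N A j q"
    let ?p = "(i, j, 0) # q"
    have "q \<noteq> []" "chain q" "\<forall>e\<in>set q. is_edge N A e" "e_range (hd q) = j"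
      using Sq by (auto simp: S_def is_path_def)
    then have "chain ?p" by (cases q) (auto simp: e_source_def)
    moreover have "is_edge N A (i, j, 0)" using ij by (simp add: is_edge_def)
    ultimately have "S N A i ?p" using \<open>\<forall>e\<in>set q. is_edge N A e\<close>
      by (auto simp: S_def is_path_def e_range_def)
    then have "kep_act A B (D * a) ?p = ?p" using per_i by blast
    moreover have "D * a * B i j mod a = 0" "D * a * B i j div a = D * B i j" using a by auto
    ultimately show "kep_act A B (D * B i j) q = q" by (simp add: Let_def a_def[symmetric])
  qed
  have "D * B i j \<noteq> 0" using D b by simp
  then have "finite (vertex_group N A B j)" using periodic_finite per_j by blast
  then show ?thesis using ij e by (simp add: finite_vertices_def e_source_def)
qed

end
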